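(* Assume that the subquiver $Q^d$ is connected and is not the quiver with one vertex and no arrows. Let $\chi\in M^+_{\mathbb{R}}$ with $r(\chi)=r>\frac12$, and let $\lambda$ be the antidominant cocharacter of $SG(d)$ with $\chi\in F_r(\lambda)^{\mathrm{int}}$. Let $I$ be a non-empty sub-multiset of $\{\beta\in\mathcal{W}:\langle\lambda,\beta\rangle<0\}$ and let $\sigma_I$ be the sum of its elements. Then $\chi-\sigma_I\in r\mathbb{W}$. If $\chi-\sigma_I$ lies on $F_r(\mu)^{\mathrm{int}}$ for a cocharacter $\mu$, then $\mu<\lambda$. In particular, \[(r,p)(\chi-\sigma_I)<(r,p)(\chi).\]
   Context: Let $Q=(I,E)$ be a symmetric quiver (for all $i,j$ the number of arrows $i\to j$ equals the number $j\to i$), with source and target maps $s,t$. Fix $d\in\mathbb{N}^I$; $Q^d$ is the subquiver on vertices $i$ with $d_i\neq0$. Let $R(d)=\bigoplus_{a\in E}\mathrm{Hom}(\mathbb{C}^{d_{s(a)}},\mathbb{C}^{d_{t(a)}})$, $G(d)=\prod_i GL(d_i)$ acting by conjugation. Let $M=\bigoplus_{i\in I,1\le j\le d_i}\mathbb{Z}\beta^i_j$ be the weight lattice of the diagonal torus, $M_{\mathbb{R}}=M\otimes\mathbb{R}$, $N$ the dual lattice, $\langle\,,\rangle$ the pairing. Positive roots: $\beta^i_a-\beta^i_b$, $a<b$; $M^+_{\mathbb{R}}$ is the set of dominant real weights $\sum x^i_j\beta^i_j$ with $x^i_1\ge\cdots\ge x^i_{d_i}$. A cocharacter of $SG(d)$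 means $\lambda\in N$ with $\langle\lambda,\sum_{i,j}\beta^i_j\rangle=0$; antidominant means $\lambda^i_1\le\cdots\le\lambda^i_{d_i}$ for all $i$. Let $\mathcal{W}$ be the multiset of torus weights of $R(d)$ (for each arrow $a:i\to j$ and $x\le d_i$, $y\le d_j$, the weight $\beta^j_y-\beta^i_x$). Let $\tau_d=(\sum_{i,j}\beta^i_j)/(\sum_i d_i)$ and $\mathbb{W}=\sum_{\beta\in\mathcal{W}}[0,\beta]+\mathbb{R}\tau_d$ (Minkowski sum). For $\chi\in M_{\mathbb{R}}$, $r(\chi)$ is the smallest $r\ge0$ with $\chi\in r\mathbb{W}$; if $r(\chi)=r$, writing $\chi=\sum_{\beta\in\mathcal{W}}c_\beta\beta+c\tau_d$ with $c\in\mathbb{R}$, $-r\le c_\beta\le0$, the $p$-invariant $p(\chi)$ is the smallest number of coefficients $c_\beta$ equal to $-r$ in such an expression; $(r,p)(\chi)=(r(\chi),p(\chi))$, and pairs are compared lexicographically. Set $N^{\lambda>0}:=\sum_{\beta\in\mathcal{W},\,\langle\lambda,\beta\rangle>0}\beta$; $F_r(\lambda)=\{\psi\in r\mathbb{W}:\langle\lambda,\psi\rangle+r\langle\lambda,N^{\lambda>0}\rangle=0\}$. Write $\mu\ge\lambda$ if every $\beta\in\mathcal{W}$ with $\langle\lambda,\beta\rangle>0$ satisfies $\langle\mu,\beta\rangle>0$; $\mu>\lambda$ (equivalently $\lambda<\mu$) if $\mu\ge\lambda$ but not $\lambda\ge\mu$. Let $F_r(\lambda)^{\mathrm{int}}:=F_r(\lambda)\setminus\bigcup_{\mu>\lambda}F_r(\mu)$.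 *)

theory Defs
  imports Complex_Main
begin

text \<open>The weight lattice M (resp. M_R) is modelled by functions on the index set
  idx I d = {(i,j). i in I, 1 <= j <= d i} (basis vectors beta^i_j); cocharacters
  (elements of N) are integer-valued functions; the pairing is the sum over idx.
  The multiset of weights of R(d) is indexed by labels (a,x,y) with weight
  beta^{t a}_y - beta^{s a}_x.\<close>

definition idx :: "'v set \<Rightarrow> ('v \<Rightarrow> nat) \<Rightarrow> ('v \<times> nat) set" where
  "idx I d = {(i,j). i \<in> I \<and> 1 \<le> j \<and> j \<le> d i}"

definition labels :: "'e set \<Rightarrow> ('e \<Rightarrow> 'v) \<Rightarrow> ('e \<Rightarrow> 'v) \<Rightarrow> ('v \<Rightarrow> nat) \<Rightarrow> ('e \<times> nat \<times> nat) set" where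
  "labels E s t d = {(a,x,y). a \<in> E \<and> 1 \<le> x \<and> x \<le> d (s a) \<and> 1 \<le> y \<and> y \<le> d (t a)}"

definition wt :: "('e \<Rightarrow> 'v) \<Rightarrow> ('e \<Rightarrow> 'v) \<Rightarrow> 'e \<times> nat \<times> nat \<Rightarrow> ('v \<times> nat \<Rightarrow> real)" where
  "wt s t l = (case l of (a,x,y) \<Rightarrow>
     (\<lambda>k. (if k = (t a, y) then 1 else 0) - (if k = (s a, x) then 1 else 0)))"

definition tau :: "'v set \<Rightarrow> ('v \<Rightarrow> nat) \<Rightarrow> ('v \<times> nat \<Rightarrow> real)" where
  "tau I d = (\<lambda>k. if k \<in> idx I d then 1 / real (\<Sum>i\<in>I. d i) else 0)"

definition pair :: "'v set \<Rightarrow> ('v \<Rightarrow> nat) \<Rightarrow> ('v \<times> nat \<Rightarrow> int) \<Rightarrow> ('v \<times> nat \<Rightarrow> real) \<Rightarrow> real" where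
  "pair I d lam chi = (\<Sum>k\<in>idx I d. real_of_int (lam k) * chi k)"

definition rW :: "'v set \<Rightarrow> 'e set \<Rightarrow> ('e \<Rightarrow> 'v) \<Rightarrow> ('e \<Rightarrow> 'v) \<Rightarrow> ('v \<Rightarrow> nat) \<Rightarrow> real
    \<Rightarrow> ('v \<times> nat \<Rightarrow> real) set" where
  "rW I E s t d r = {(\<lambda>k. (\<Sum>l\<in>labels E s t d. c l * wt s t l k) + cc * tau I d k) | c cc.
       \<forall>l\<in>labels E s t d. 0 \<le> c l \<and> c l \<le> r}"

definition r_inv :: "'v set \<Rightarrow> 'e set \<Rightarrow> ('e \<Rightarrow> 'v) \<Rightarrow> ('e \<Rightarrow> 'v) \<Rightarrow> ('v \<Rightarrow> nat)
    \<Rightarrow> ('v \<times> nat \<Rightarrow> real) \<Rightarrow> real" where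
  "r_inv I E s t d chi = (LEAST r::real. 0 \<le> r \<and> chi \<in> rW I E s t d r)"

definition p_inv :: "'v set \<Rightarrow> 'e set \<Rightarrow> ('e \<Rightarrow> 'v) \<Rightarrow> ('e \<Rightarrow> 'v) \<Rightarrow> ('v \<Rightarrow> nat)
    \<Rightarrow> ('v \<times> nat \<Rightarrow> real) \<Rightarrow> nat" where
  "p_inv I E s t d chi = (let r = r_inv I E s t d chi in
     (LEAST n::nat. \<exists>c cc. (\<forall>l\<in>labels E s t d. - r \<le> c l \<and> c l \<le> 0) \<and>
        chi = (\<lambda>k. (\<Sum>l\<in>labels E s t d. c l * wt s t l k) + cc * tau I d k) \<and>
        card {l\<in>labels E s t d. c l = - r} = n))"

definition rp_less :: "real \<times> nat \<Rightarrow> real \<times> nat \<Rightarrow> bool" where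
  "rp_less a b \<longleftrightarrow> fst a < fst b \<or> (fst a = fst b \<and> snd a < snd b)"

definition Npos :: "'v set \<Rightarrow> 'e set \<Rightarrow> ('e \<Rightarrow> 'v) \<Rightarrow> ('e \<Rightarrow> 'v) \<Rightarrow> ('v \<Rightarrow> nat)
    \<Rightarrow> ('v \<times> nat \<Rightarrow> int) \<Rightarrow> ('v \<times> nat \<Rightarrow> real)" where
  "Npos I E s t d lam = (\<lambda>k. \<Sum>l\<in>{l\<in>labels E s t d. pair I d lam (wt s t l) > 0}. wt s t l k)"

definition Fr :: "'v set \<Rightarrow> 'e set \<Rightarrow> ('e \<Rightarrow> 'v) \<Rightarrow> ('e \<Rightarrow> 'v) \<Rightarrow> ('v \<Rightarrow> nat) \<Rightarrow> real
    \<Rightarrow> ('v \<times> nat \<Rightarrow> int) \<Rightarrow> ('v \<times> nat \<Rightarrow> real) set" where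
  "Fr I E s t d r lam = {psi \<in> rW I E s t d r.
      pair I d lam psi + r * pair I d lam (Npos I E s t d lam) = 0}"

definition cocha_geq :: "'v set \<Rightarrow> 'e set \<Rightarrow> ('e \<Rightarrow> 'v) \<Rightarrow> ('e \<Rightarrow> 'v) \<Rightarrow> ('v \<Rightarrow> nat)
    \<Rightarrow> ('v \<times> nat \<Rightarrow> int) \<Rightarrow> ('v \<times> nat \<Rightarrow> int) \<Rightarrow> bool" where
  "cocha_geq I E s t d mu lam \<longleftrightarrow>
     (\<forall>l\<in>labels E s t d. pair I d lam (wt s t l) > 0 \<longrightarrow> pair I d mu (wt s t l) > 0)"

definition cocha_gt :: "'v set \<Rightarrow> 'e set \<Rightarrow> ('e \<Rightarrow> 'v) \<Rightarrow> ('e \<Rightarrow> 'v) \<Rightarrow> ('v \<Rightarrow> nat)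
    \<Rightarrow> ('v \<times> nat \<Rightarrow> int) \<Rightarrow> ('v \<times> nat \<Rightarrow> int) \<Rightarrow> bool" where
  "cocha_gt I E s t d mu lam \<longleftrightarrow>
     cocha_geq I E s t d mu lam \<and> \<not> cocha_geq I E s t d lam mu"

definition cochar_SG :: "'v set \<Rightarrow> ('v \<Rightarrow> nat) \<Rightarrow> ('v \<times> nat \<Rightarrow> int) \<Rightarrow> bool" where
  "cochar_SG I d mu \<longleftrightarrow> (\<forall>k. k \<notin> idx I d \<longrightarrow> mu k = 0) \<and> (\<Sum>k\<in>idx I d. mu k) = 0"

definition antidominant :: "'v set \<Rightarrow> ('v \<Rightarrow> nat) \<Rightarrow> ('v \<times> nat \<Rightarrow> int) \<Rightarrow> bool" where
  "antidominant I d lam \<longleftrightarrow>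
     (\<forall>i\<in>I. \<forall>j1 j2. 1 \<le> j1 \<longrightarrow> j1 \<le> j2 \<longrightarrow> j2 \<le> d i \<longrightarrow> lam (i,j1) \<le> lam (i,j2))"

definition dominant_weight :: "'v set \<Rightarrow> ('v \<Rightarrow> nat) \<Rightarrow> ('v \<times> nat \<Rightarrow> real) \<Rightarrow> bool" where
  "dominant_weight I d chi \<longleftrightarrow> (\<forall>k. k \<notin> idx I d \<longrightarrow> chi k = 0) \<and>
     (\<forall>i\<in>I. \<forall>j1 j2. 1 \<le> j1 \<longrightarrow> j1 \<le> j2 \<longrightarrow> j2 \<le> d i \<longrightarrow> chi (i,j2) \<le> chi (i,j1))"

definition Fr_int :: "'v set \<Rightarrow> 'e set \<Rightarrow> ('e \<Rightarrow> 'v) \<Rightarrow> ('e \<Rightarrow> 'v) \<Rightarrow> ('v \<Rightarrow> nat) \<Rightarrow> real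
    \<Rightarrow> ('v \<times> nat \<Rightarrow> int) \<Rightarrow> ('v \<times> nat \<Rightarrow> real) set" where
  "Fr_int I E s t d r lam = Fr I E s t d r lam -
     (\<Union>mu\<in>{mu. cochar_SG I d mu \<and> cocha_gt I E s t d mu lam}. Fr I E s t d r mu)"

definition symmetric_quiver :: "'v set \<Rightarrow> 'e set \<Rightarrow> ('e \<Rightarrow> 'v) \<Rightarrow> ('e \<Rightarrow> 'v) \<Rightarrow> bool" where
  "symmetric_quiver I E s t \<longleftrightarrow> finite I \<and> finite E \<and> (\<forall>a\<in>E. s a \<in> I \<and> t a \<in> I) \<and>
     (\<forall>i j. card {a\<in>E. s a = i \<and> t a = j} = card {a\<in>E. s a = j \<and> t a = i})"

definition supp_vertices :: "'v set \<Rightarrow> ('v \<Rightarrow> nat) \<Rightarrow> 'v set" where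
  "supp_vertices I d = {i\<in>I. d i \<noteq> 0}"

definition supp_arrows :: "'v set \<Rightarrow> 'e set \<Rightarrow> ('e \<Rightarrow> 'v) \<Rightarrow> ('e \<Rightarrow> 'v) \<Rightarrow> ('v \<Rightarrow> nat) \<Rightarrow> 'e set" where
  "supp_arrows I E s t d = {a\<in>E. s a \<in> supp_vertices I d \<and> t a \<in> supp_vertices I d}"

definition Qd_connected :: "'v set \<Rightarrow> 'e set \<Rightarrow> ('e \<Rightarrow> 'v) \<Rightarrow> ('e \<Rightarrow> 'v) \<Rightarrow> ('v \<Rightarrow> nat) \<Rightarrow> bool" where
  "Qd_connected I E s t d \<longleftrightarrow> supp_vertices I d \<noteq> {} \<and>
     (\<forall>i\<in>supp_vertices I d. \<forall>j\<in>supp_vertices I d.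
        (\<lambda>u v. \<exists>a\<in>supp_arrows I E s t d. (s a = u \<and> t a = v) \<or> (s a = v \<and> t a = u))\<^sup>*\<^sup>* i j)"

definition Qd_trivial :: "'v set \<Rightarrow> 'e set \<Rightarrow> ('e \<Rightarrow> 'v) \<Rightarrow> ('e \<Rightarrow> 'v) \<Rightarrow> ('v \<Rightarrow> nat) \<Rightarrow> bool" where
  "Qd_trivial I E s t d \<longleftrightarrow> card (supp_vertices I d) = 1 \<and> supp_arrows I E s t d = {}"

end

theory Submission
  imports Defs "HOL-Analysis.Analysis"
begin

locale SQ =
  fixes I :: "'v set" and E :: "'e set" and s t :: "'e \<Rightarrow> 'v" and d :: "'v \<Rightarrow> nat"
  assumes sq: "symmetric_quiver I E s t"
begin

abbreviation "L \<equiv> labels E s t d"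
abbreviation "w \<equiv> wt s t"
abbreviation "X \<equiv> idx I d"

lemma finI: "finite I" and finE: "finite E" and st_in: "a \<in> E \<Longrightarrow> s a \<in> I \<and> t a \<in> I"
  using sq by (auto simp: symmetric_quiver_def)

lemma labels_eq: "L = (SIGMA a:E. {1..d (s a)} \<times> {1..d (t a)})"
  unfolding labels_def by auto

lemma finL: "finite L" unfolding labels_eq using finE by auto

lemma idx_eq: "X = (SIGMA i:I. {1..d i})" by (auto simp: idx_def)

lemma finX: "finite X" unfolding idx_eq using finI by auto

lemma cardX: "card X = (\<Sum>i\<in>I. d i)" unfolding idx_eq using finI by (simp add: card_SigmaI)

lemma lab_idx: assumes "(a,x,y) \<in> L" shows "(t a, y) \<in> X" "(s a, x) \<in> X"
  using assms st_in[of a] by (auto simp: labels_def idx_def)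

lemma pair_wt: assumes "(a,x,y) \<in> L"
  shows "pair I d mu (w (a,x,y)) = real_of_int (mu (t a, y) - mu (s a, x))"
proof -
  have "pair I d mu (w (a,x,y)) = (\<Sum>k\<in>X. (if k = (t a, y) then real_of_int (mu k) else 0)
      - (if k = (s a, x) then real_of_int (mu k) else 0))"
    unfolding pair_def by (rule sum.cong) (auto simp: wt_def)
  also have "\<dots> = (\<Sum>k\<in>X. (if k = (t a, y) then real_of_int (mu k) else 0))
      - (\<Sum>k\<in>X. (if k = (s a, x) then real_of_int (mu k) else 0))"
    by (simp add: sum_subtractf)
  also have "\<dots> = real_of_int (mu (t a, y)) - real_of_int (mu (s a, x))"
    using lab_idx[OF assms] finX by (simp add: sum.delta)
  finally show ?thesis by simp
qed

lemma sum_wt: assumes "l \<in> L" shows "(\<Sum>k\<in>X. w l k) = 0"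
proof -
  obtain a x y where l: "l = (a,x,y)" by (cases l) auto
  have "(\<Sum>k\<in>X. w l k) = (\<Sum>k\<in>X. (if k = (t a, y) then 1 else 0)) - (\<Sum>k\<in>X. (if k = (s a, x) then 1::real else 0))"
    unfolding l wt_def by (simp add: sum_subtractf)
  also have "\<dots> = 0" using lab_idx[OF assms[unfolded l]] finX by (simp add: sum.delta)
  finally show ?thesis .
qed


lemma pair_tau: assumes "cochar_SG I d mu" shows "pair I d mu (tau I d) = 0"
proof -
  have "pair I d mu (tau I d) = (\<Sum>k\<in>X. real_of_int (mu k)) / real (\<Sum>i\<in>I. d i)"
    unfolding pair_def tau_def by (simp add: sum_divide_distrib)
  also have "(\<Sum>k\<in>X. real_of_int (mu k)) = 0" using assms unfolding cochar_SG_def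
    by (metis of_int_0 of_int_sum)
  finally show ?thesis by simp
qed

lemma sum_tau: assumes "X \<noteq> {}" shows "(\<Sum>k\<in>X. tau I d k) = 1"
proof -
  have "card X > 0" using assms finX by (simp add: card_gt_0_iff)
  then show ?thesis unfolding tau_def using cardX by (simp flip: of_nat_sum)
qed

lemma pair_lin: "pair I d mu (\<lambda>k. (\<Sum>l\<in>L. c l * w l k) + cc * tau I d k)
   = (\<Sum>l\<in>L. c l * pair I d mu (w l)) + cc * pair I d mu (tau I d)"
  unfolding pair_def
  by (simp add: distrib_left sum.distrib sum_distrib_left sum_distrib_right mult_ac sum.swap[of _ X])

lemma sum_rep: assumes "X \<noteq> {}"
  shows "(\<Sum>k\<in>X. (\<Sum>l\<in>L. c l * w l k) + cc * tau I d k) = cc"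
proof -
  have "(\<Sum>k\<in>X. (\<Sum>l\<in>L. c l * w l k)) = (\<Sum>l\<in>L. c l * (\<Sum>k\<in>X. w l k))"
    by (simp add: sum_distrib_left sum.swap[of _ X])
  also have "\<dots> = 0" using sum_wt by simp
  finally show ?thesis using sum_tau[OF assms] by (simp add: sum.distrib sum_distrib_left[symmetric])
qed

lemma ex_flip: "\<exists>f. inj_on f E \<and> (\<forall>a\<in>E. f a \<in> E \<and> s (f a) = t a \<and> t (f a) = s a)"
proof -
  define A where "A = (\<lambda>p. {a\<in>E. s a = fst p \<and> t a = snd p})"
  have "\<forall>p. \<exists>h. bij_betw h (A p) (A (snd p, fst p))"
  proof
    fix p :: "'v \<times> 'v"
    have "card (A p) = card (A (snd p, fst p))" using sq unfolding symmetric_quiver_def A_def by auto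
    moreover have "finite (A p)" "finite (A (snd p, fst p))" using finE unfolding A_def by auto
    ultimately show "\<exists>h. bij_betw h (A p) (A (snd p, fst p))" using finite_same_card_bij by blast
  qed
  then obtain g where g: "\<And>p. bij_betw (g p) (A p) (A (snd p, fst p))" by metis
  define f where "f = (\<lambda>a. g (s a, t a) a)"
  have fa: "f a \<in> A (t a, s a)" if "a \<in> E" for a
    using g[of "(s a, t a)"] that unfolding f_def bij_betw_def A_def by auto
  have "inj_on f E"
  proof (rule inj_onI)
    fix a b assume ab: "a \<in> E" "b \<in> E" "f a = f b"
    then have "s a = s b" "t a = t b" using fa[of a] fa[of b] unfolding A_def by auto
    then have "g (s a, t a) a = g (s a, t a) b" using ab(3) unfolding f_def by simp
    moreover have "a \<in> A (s a, t a)" "b \<in> A (s a, t a)" using ab \<open>s a = s b\<close> \<open>t a = t b\<close> unfolding A_def by auto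
    ultimately show "a = b" using g[of "(s a, t a)"] unfolding bij_betw_def inj_on_def by auto
  qed
  then show ?thesis using fa unfolding A_def by auto
qed

definition "flip = (SOME f. inj_on f E \<and> (\<forall>a\<in>E. f a \<in> E \<and> s (f a) = t a \<and> t (f a) = s a))"

lemma flip: "inj_on flip E" "\<And>a. a \<in> E \<Longrightarrow> flip a \<in> E \<and> s (flip a) = t a \<and> t (flip a) = s a"
  using someI_ex[OF ex_flip] unfolding flip_def by auto

definition "rv = (\<lambda>(a,x,y). (flip a, y, x))"

lemma rv_simp[simp]: "rv (a,x,y) = (flip a, y, x)" by (simp add: rv_def)

lemma rev_w: "l \<in> L \<Longrightarrow> w (rv l) k = - w l k"
  by (cases l) (auto simp: rev_def wt_def labels_def flip)

lemma rev_in: "l \<in> L \<Longrightarrow> rv l \<in> L"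
  by (cases l) (auto simp: rev_def labels_def flip)

lemma rev_inj: "inj_on rv L"
  using flip(1) unfolding inj_on_def rev_def labels_def by auto

lemma rev_img: "rv ` L = L"
  using endo_inj_surj[OF finL _ rev_inj] rev_in by blast

lemma pair_rev: "l \<in> L \<Longrightarrow> pair I d mu (w (rv l)) = - pair I d mu (w l)"
  unfolding pair_def using rev_w by (simp add: sum_negf)

lemma sum_rev: "(\<Sum>l\<in>L. (- c (rv l)) * w l k) = (\<Sum>l\<in>L. c l * w l k)"
proof -
  have "(\<Sum>l\<in>L. (- c (rv l)) * w l k) = (\<Sum>l\<in>L. c (rv l) * w (rv l) k)"
    by (rule sum.cong) (auto simp: rev_w)
  also have "\<dots> = (\<Sum>l\<in>rv ` L. c l * w l k)"
    by (simp add: sum.reindex[OF rev_inj])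
  finally show ?thesis using rev_img by simp
qed

definition "rWn r = {(\<lambda>k. (\<Sum>l\<in>L. c l * w l k) + cc * tau I d k) | c cc.
       \<forall>l\<in>L. - r \<le> c l \<and> c l \<le> 0}"

lemma rW_eq: "rW I E s t d r = rWn r"
proof
  show "rW I E s t d r \<subseteq> rWn r"
  proof
    fix v assume "v \<in> rW I E s t d r"
    then obtain c cc where v: "v = (\<lambda>k. (\<Sum>l\<in>L. c l * w l k) + cc * tau I d k)"
      and c: "\<forall>l\<in>L. 0 \<le> c l \<and> c l \<le> r" unfolding rW_def by auto
    have "v = (\<lambda>k. (\<Sum>l\<in>L. (- c (rv l)) * w l k) + cc * tau I d k)" using v sum_rev by simp
    moreover have "\<forall>l\<in>L. - r \<le> - c (rv l) \<and> - c (rv l) \<le> 0" using c rev_in by force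
    ultimately show "v \<in> rWn r" unfolding rWn_def mem_Collect_eq
      by (intro exI[of _ "\<lambda>l. - c (rv l)"] exI[of _ cc]) simp
  qed
next
  show "rWn r \<subseteq> rW I E s t d r"
  proof
    fix v assume "v \<in> rWn r"
    then obtain c cc where v: "v = (\<lambda>k. (\<Sum>l\<in>L. c l * w l k) + cc * tau I d k)"
      and c: "\<forall>l\<in>L. - r \<le> c l \<and> c l \<le> 0" unfolding rWn_def by auto
    have "v = (\<lambda>k. (\<Sum>l\<in>L. (- c (rv l)) * w l k) + cc * tau I d k)" using v sum_rev by simp
    moreover have "\<forall>l\<in>L. 0 \<le> - c (rv l) \<and> - c (rv l) \<le> r" using c rev_in by force
    ultimately show "v \<in> rW I E s t d r" unfolding rW_def mem_Collect_eq
      by (intro exI[of _ "\<lambda>l. - c (rv l)"] exI[of _ cc]) simp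
  qed
qed


lemma pair_Npos: "pair I d mu (Npos I E s t d mu) = (\<Sum>l\<in>L. if pair I d mu (w l) > 0 then pair I d mu (w l) else 0)"
proof -
  have "pair I d mu (Npos I E s t d mu) = (\<Sum>l\<in>{l\<in>L. pair I d mu (w l) > 0}. pair I d mu (w l))"
    unfolding pair_def Npos_def by (simp add: sum_distrib_left sum.swap[of _ X])
  also have "\<dots> = (\<Sum>l\<in>L. if pair I d mu (w l) > 0 then pair I d mu (w l) else 0)"
    using finL by (simp add: sum.inter_filter)
  finally show ?thesis .
qed

lemma extremal:
  assumes mu: "cochar_SG I d mu" and r: "0 \<le> r" and c: "\<forall>l\<in>L. - r \<le> c l \<and> c l \<le> 0"
  shows "pair I d mu (\<lambda>k. (\<Sum>l\<in>L. c l * w l k) + cc * tau I d k) + r * pair I d mu (Npos I E s t d mu) = 0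
     \<longleftrightarrow> (\<forall>l\<in>L. pair I d mu (w l) > 0 \<longrightarrow> c l = - r) \<and> (\<forall>l\<in>L. pair I d mu (w l) < 0 \<longrightarrow> c l = 0)"
proof -
  define p where "p = (\<lambda>l. pair I d mu (w l))"
  define g where "g = (\<lambda>l. c l * p l + r * (if p l > 0 then p l else 0))"
  have "pair I d mu (\<lambda>k. (\<Sum>l\<in>L. c l * w l k) + cc * tau I d k) + r * pair I d mu (Npos I E s t d mu)
      = (\<Sum>l\<in>L. g l)"
    unfolding pair_lin pair_tau[OF mu] pair_Npos g_def p_def
    by (simp add: sum.distrib sum_distrib_left)
  moreover have g0: "\<forall>l\<in>L. 0 \<le> g l"
  proof
    fix l assume l: "l \<in> L"
    show "0 \<le> g l"
    proof (cases "p l > 0")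
      case True
      then have "g l = (c l + r) * p l" unfolding g_def by (simp add: algebra_simps)
      moreover have "0 \<le> c l + r" using c l by force
      ultimately show ?thesis using True by simp
    next
      case False
      then have "g l = c l * p l" unfolding g_def by simp
      then show ?thesis using False c l by (simp add: mult_nonpos_nonpos)
    qed
  qed
  moreover have "(g l = 0) \<longleftrightarrow> ((p l > 0 \<longrightarrow> c l = - r) \<and> (p l < 0 \<longrightarrow> c l = 0))" for l
  proof (cases "p l > 0")
    case True
    then have "g l = (c l + r) * p l" unfolding g_def by (simp add: algebra_simps)
    then show ?thesis using True by auto
  next
    case False
    then have "g l = c l * p l" unfolding g_def by simp
    then show ?thesis using False by auto
  qed
  ultimately show ?thesis using sum_nonneg_eq_0_iff[OF finL, of g] unfolding p_def by auto
qed

lemma Fr_rep: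
  assumes mu: "cochar_SG I d mu" and r: "0 \<le> r" and v: "v \<in> Fr I E s t d r mu"
    and c: "\<forall>l\<in>L. - r \<le> c l \<and> c l \<le> 0" and veq: "v = (\<lambda>k. (\<Sum>l\<in>L. c l * w l k) + cc * tau I d k)"
  shows "(\<forall>l\<in>L. pair I d mu (w l) > 0 \<longrightarrow> c l = - r) \<and> (\<forall>l\<in>L. pair I d mu (w l) < 0 \<longrightarrow> c l = 0)"
  using v extremal[OF mu r c, of cc] unfolding Fr_def veq by auto

lemma rep_Fr:
  assumes mu: "cochar_SG I d mu" and r: "0 \<le> r"
    and c: "\<forall>l\<in>L. - r \<le> c l \<and> c l \<le> 0" and veq: "v = (\<lambda>k. (\<Sum>l\<in>L. c l * w l k) + cc * tau I d k)"
    and ext: "(\<forall>l\<in>L. pair I d mu (w l) > 0 \<longrightarrow> c l = - r) \<and> (\<forall>l\<in>L. pair I d mu (w l) < 0 \<longrightarrow> c l = 0)"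
  shows "v \<in> Fr I E s t d r mu"
proof -
  have "v \<in> rWn r" unfolding rWn_def veq using c by blast
  then show ?thesis using extremal[OF mu r c, of cc] ext unfolding Fr_def rW_eq veq by auto
qed


lemma rW_rep: assumes X: "X \<noteq> {}" and v: "v \<in> rW I E s t d x"
  shows "\<exists>c. (\<forall>l\<in>L. 0 \<le> c l \<and> c l \<le> x) \<and> v = (\<lambda>k. (\<Sum>l\<in>L. c l * w l k) + (\<Sum>k\<in>X. v k) * tau I d k)"
proof -
  obtain c cc where veq: "v = (\<lambda>k. (\<Sum>l\<in>L. c l * w l k) + cc * tau I d k)"
      and c: "\<forall>l\<in>L. 0 \<le> c l \<and> c l \<le> x" using v unfolding rW_def by auto
  have "(\<Sum>k\<in>X. v k) = cc" unfolding veq using sum_rep[OF X] by simp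
  then show ?thesis using veq c by auto
qed

lemma rinv_char:
  assumes X: "X \<noteq> {}" and v: "v \<in> rW I E s t d r0" and r0: "0 \<le> r0"
  shows "0 \<le> r_inv I E s t d v \<and> v \<in> rW I E s t d (r_inv I E s t d v)
     \<and> (\<forall>x. 0 \<le> x \<and> v \<in> rW I E s t d x \<longrightarrow> r_inv I E s t d v \<le> x)"
proof -
  define R where "R = {x. 0 \<le> x \<and> v \<in> rW I E s t d x}"
  define m where "m = Inf R"
  define CC where "CC = (\<Sum>k\<in>X. v k)"
  have Rne: "R \<noteq> {}" using v r0 unfolding R_def by auto
  have bdd: "bdd_below R" unfolding R_def by (rule bdd_belowI[of _ 0]) auto
  have m0: "0 \<le> m" unfolding m_def using Rne by (rule cInf_greatest) (auto simp: R_def)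
  have "\<forall>n. \<exists>c. (\<forall>l\<in>L. 0 \<le> c l \<and> c l \<le> m + inverse (real (Suc n)))
       \<and> v = (\<lambda>k. (\<Sum>l\<in>L. c l * w l k) + CC * tau I d k)"
  proof
    fix n
    have "Inf R < m + inverse (real (Suc n))" unfolding m_def by simp
    then obtain x where x: "x \<in> R" "x < m + inverse (real (Suc n))" using cInf_lessD[OF Rne] by blast
    have "v \<in> rW I E s t d x" using x(1) unfolding R_def by simp
    from rW_rep[OF X this] obtain c where c: "\<forall>l\<in>L. 0 \<le> c l \<and> c l \<le> x"
      and ceq: "v = (\<lambda>k. (\<Sum>l\<in>L. c l * w l k) + CC * tau I d k)" unfolding CC_def by blast
    have "\<forall>l\<in>L. 0 \<le> c l \<and> c l \<le> m + inverse (real (Suc n))" using c x(2) by force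
    then show "\<exists>c. (\<forall>l\<in>L. 0 \<le> c l \<and> c l \<le> m + inverse (real (Suc n)))
       \<and> v = (\<lambda>k. (\<Sum>l\<in>L. c l * w l k) + CC * tau I d k)" using ceq by blast
  qed
  from choice[OF this] obtain C where CC': "\<forall>n. (\<forall>l\<in>L. 0 \<le> C n l \<and> C n l \<le> m + inverse (real (Suc n)))
       \<and> v = (\<lambda>k. (\<Sum>l\<in>L. C n l * w l k) + CC * tau I d k)" by blast
  have C: "\<And>n. (\<forall>l\<in>L. 0 \<le> C n l \<and> C n l \<le> m + inverse (real (Suc n)))"
    and Ceq: "\<And>n. v = (\<lambda>k. (\<Sum>l\<in>L. C n l * w l k) + CC * tau I d k)" using CC' by auto
  have bnd: "bounded ((\<lambda>x. x k) ` range C)" if "k \<in> L" for k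
  proof -
    have "(\<lambda>x. x k) ` range C \<subseteq> {0..m+1}"
    proof
      fix y assume "y \<in> (\<lambda>x. x k) ` range C"
      then obtain n where y: "y = C n k" by auto
      have "inverse (real (Suc n)) \<le> 1" by (simp add: inverse_le_1_iff)
      then show "y \<in> {0..m+1}" using C[of n] that y by force
    qed
    then show ?thesis using bounded_subset bounded_closed_interval by blast
  qed
  obtain lim :: "'e \<times> nat \<times> nat \<Rightarrow> real" and \<sigma> where \<sigma>: "strict_mono \<sigma>"
    and ev: "\<forall>e>0. eventually (\<lambda>n. \<forall>i\<in>L. dist (C (\<sigma> n) i) (lim i) < e) sequentially"
    using compact_lemma_general[of L "\<lambda>x k. x k" C id, OF finL bnd] by auto
  have conv: "(\<lambda>n. C (\<sigma> n) k) \<longlonglongrightarrow> lim k" if "k \<in> L" for k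
    unfolding tendsto_iff
  proof (intro allI impI)
    fix e :: real assume "e > 0"
    from ev[rule_format, OF this] show "eventually (\<lambda>n. dist (C (\<sigma> n) k) (lim k) < e) sequentially"
      by (rule eventually_mono) (use that in auto)
  qed
  have lim0: "0 \<le> lim k" if "k \<in> L" for k
    by (rule LIMSEQ_le_const[OF conv[OF that]]) (use C that in auto)
  have mseq: "(\<lambda>n. m + inverse (real (Suc (\<sigma> n)))) \<longlonglongrightarrow> m"
    using LIMSEQ_subseq_LIMSEQ[OF LIMSEQ_inverse_real_of_nat_add \<sigma>] by (simp add: comp_def)
  have limm: "lim k \<le> m" if "k \<in> L" for k
    by (rule LIMSEQ_le[OF conv[OF that] mseq]) (use C that in auto)
  have veq: "v = (\<lambda>k. (\<Sum>l\<in>L. lim l * w l k) + CC * tau I d k)"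
  proof
    fix k
    have "(\<lambda>n. (\<Sum>l\<in>L. C (\<sigma> n) l * w l k) + CC * tau I d k) \<longlonglongrightarrow> (\<Sum>l\<in>L. lim l * w l k) + CC * tau I d k"
      by (intro tendsto_add tendsto_sum tendsto_mult_right tendsto_const conv)
    moreover have "(\<lambda>n. (\<Sum>l\<in>L. C (\<sigma> n) l * w l k) + CC * tau I d k) = (\<lambda>n. v k)"
    proof (rule ext)
      fix n show "(\<Sum>l\<in>L. C (\<sigma> n) l * w l k) + CC * tau I d k = v k"
        using fun_cong[OF Ceq[of "\<sigma> n"], of k] by simp
    qed
    ultimately show "v k = (\<Sum>l\<in>L. lim l * w l k) + CC * tau I d k"
      by (simp add: LIMSEQ_const_iff)
  qed
  have "v \<in> rW I E s t d m" unfolding rW_def mem_Collect_eq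
    by (intro exI[of _ lim] exI[of _ CC]) (use veq lim0 limm in auto)
  then have mR: "m \<in> R" unfolding R_def using m0 by simp
  have mle: "\<forall>x\<in>R. m \<le> x" unfolding m_def using bdd by (auto intro: cInf_lower)
  have "r_inv I E s t d v = m" unfolding r_inv_def
    by (rule Least_equality) (use mR mle in \<open>auto simp: R_def\<close>)
  then show ?thesis using mR mle unfolding R_def by auto
qed


lemma pair_comb: "pair I d (\<lambda>k. K * lam k + mu k) v = real_of_int K * pair I d lam v + pair I d mu v"
  unfolding pair_def by (simp add: distrib_left distrib_right sum.distrib sum_distrib_left mult_ac)

lemma pair_wt_int: "l \<in> L \<Longrightarrow> \<exists>z. pair I d mu (w l) = real_of_int z"
  by (cases l) (metis pair_wt)

lemma main:
  assumes conn: "Qd_connected I E s t d"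
    and rdef: "r = r_inv I E s t d chi"
    and rhalf: "r > 1/2"
    and lam: "cochar_SG I d lam"
    and chiF: "chi \<in> Fr_int I E s t d r lam"
    and SL: "S \<subseteq> L" and Sne: "S \<noteq> {}"
    and Sneg: "\<forall>l\<in>S. pair I d lam (w l) < 0"
  shows "(let sigma = (\<lambda>k. \<Sum>l\<in>S. wt s t l k); psi = (\<lambda>k. chi k - sigma k) in
           psi \<in> rW I E s t d r \<and>
           (\<forall>mu. cochar_SG I d mu \<and> psi \<in> Fr_int I E s t d r mu \<longrightarrow> cocha_gt I E s t d lam mu) \<and>
           rp_less (r_inv I E s t d psi, p_inv I E s t d psi) (r, p_inv I E s t d chi))"
proof -
  have r0: "0 \<le> r" using rhalf by simp
  have Xne: "X \<noteq> {}"
  proof -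
    obtain i where "i \<in> I" "d i \<noteq> 0" using conn unfolding Qd_connected_def supp_vertices_def by auto
    then have "(i, 1) \<in> X" unfolding idx_def by auto
    then show ?thesis by auto
  qed
  have finS: "finite S" using SL finL finite_subset by blast
  have chiFr: "chi \<in> Fr I E s t d r lam" using chiF unfolding Fr_int_def by auto
  have "chi \<in> rWn r" using chiFr unfolding Fr_def rW_eq by auto
  then obtain c0 cc0 where "\<forall>l\<in>L. - r \<le> c0 l \<and> c0 l \<le> 0" "chi = (\<lambda>k. (\<Sum>l\<in>L. c0 l * w l k) + cc0 * tau I d k)"
    unfolding rWn_def by auto
  then have exn: "\<exists>n c cc. (\<forall>l\<in>L. - r \<le> c l \<and> c l \<le> 0) \<and>
        chi = (\<lambda>k. (\<Sum>l\<in>L. c l * w l k) + cc * tau I d k) \<and> card {l\<in>L. c l = - r} = n" by blast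
  have pchi: "p_inv I E s t d chi = (LEAST n. \<exists>c cc. (\<forall>l\<in>L. - r \<le> c l \<and> c l \<le> 0) \<and>
        chi = (\<lambda>k. (\<Sum>l\<in>L. c l * w l k) + cc * tau I d k) \<and> card {l\<in>L. c l = - r} = n)"
    unfolding p_inv_def Let_def rdef[symmetric] ..
  obtain c cc where c: "\<forall>l\<in>L. - r \<le> c l \<and> c l \<le> 0"
      and chieq: "chi = (\<lambda>k. (\<Sum>l\<in>L. c l * w l k) + cc * tau I d k)"
      and cnt: "card {l\<in>L. c l = - r} = p_inv I E s t d chi"
    using LeastI_ex[OF exn] unfolding pchi[symmetric] by blast
  have cext: "(\<forall>l\<in>L. pair I d lam (w l) > 0 \<longrightarrow> c l = - r) \<and> (\<forall>l\<in>L. pair I d lam (w l) < 0 \<longrightarrow> c l = 0)"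
    using Fr_rep[OF lam r0 chiFr c chieq] .
  define Sr where "Sr = rv ` S"
  have SrL: "Sr \<subseteq> L" using SL rev_in unfolding Sr_def by auto
  have Srpos: "\<forall>l\<in>Sr. pair I d lam (w l) > 0" using Sneg SL pair_rev unfolding Sr_def by force
  have disj: "S \<inter> Sr = {}" using Sneg Srpos by force
  have injS: "inj_on rv S" using rev_inj SL inj_on_subset by blast
  have cS: "\<forall>l\<in>S. c l = 0" using cext Sneg SL by blast
  have cSr: "\<forall>l\<in>Sr. c l = - r" using cext Srpos SrL by blast
  define e where "e = (\<lambda>l. c l + (if l \<in> S then - 1/2 else if l \<in> Sr then 1/2 else 0))"
  have eS: "\<forall>l\<in>S. e l = - 1/2" using cS unfolding e_def by simp
  have eSr: "\<forall>l\<in>Sr. e l = 1/2 - r" using cSr disj unfolding e_def by auto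
  have eO: "\<And>l. l \<notin> S \<Longrightarrow> l \<notin> Sr \<Longrightarrow> e l = c l" unfolding e_def by simp
  have erange: "\<forall>l\<in>L. - r \<le> e l \<and> e l \<le> 0"
  proof
    fix l assume l: "l \<in> L"
    show "- r \<le> e l \<and> e l \<le> 0"
    proof (cases "l \<in> S \<or> l \<in> Sr")
      case True then show ?thesis using eS eSr rhalf by auto
    next
      case False then have "e l = c l" using eO by blast
      then show ?thesis using c l by simp
    qed
  qed
  define psi where "psi = (\<lambda>k. chi k - (\<Sum>l\<in>S. w l k))"
  have psieq: "psi = (\<lambda>k. (\<Sum>l\<in>L. e l * w l k) + cc * tau I d k)"
  proof
    fix k
    have "(\<Sum>l\<in>L. e l * w l k) = (\<Sum>l\<in>L. c l * w l k) + (\<Sum>l\<in>L. (if l \<in> S then - 1/2 * w l k else 0))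
        + (\<Sum>l\<in>L. (if l \<in> Sr then 1/2 * w l k else 0))"
      unfolding e_def sum.distrib[symmetric] by (rule sum.cong) (use disj in \<open>auto simp: algebra_simps\<close>)
    also have "(\<Sum>l\<in>L. (if l \<in> S then - 1/2 * w l k else 0)) = (\<Sum>l\<in>S. - 1/2 * w l k)"
      using sum.inter_restrict[OF finL, of "\<lambda>l. - 1/2 * w l k" S] SL by (simp only: Int_absorb1)
    also have "(\<Sum>l\<in>L. (if l \<in> Sr then 1/2 * w l k else 0)) = (\<Sum>l\<in>Sr. 1/2 * w l k)"
      using sum.inter_restrict[OF finL, of "\<lambda>l. 1/2 * w l k" Sr] SrL by (simp only: Int_absorb1)
    also have "\<dots> = (\<Sum>l\<in>S. 1/2 * w (rv l) k)" unfolding Sr_def by (simp add: sum.reindex[OF injS])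
    also have "\<dots> = (\<Sum>l\<in>S. - 1/2 * w l k)"
    proof (rule sum.cong)
      fix l assume "l \<in> S"
      then have "w (rv l) k = - w l k" using rev_w SL by blast
      then show "1/2 * w (rv l) k = - 1/2 * w l k" by simp
    qed simp
    finally have "(\<Sum>l\<in>L. e l * w l k) = (\<Sum>l\<in>L. c l * w l k) - (\<Sum>l\<in>S. w l k)"
      by (simp add: sum_negf sum_divide_distrib[symmetric])
    then show "psi k = (\<Sum>l\<in>L. e l * w l k) + cc * tau I d k" unfolding psi_def chieq by simp
  qed
  have psiW: "psi \<in> rW I E s t d r" unfolding rW_eq rWn_def psieq using erange by blast
  have part2: "cocha_gt I E s t d lam mu" if mu: "cochar_SG I d mu" and psimu: "psi \<in> Fr_int I E s t d r mu" for mu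
  proof -
    have "psi \<in> Fr I E s t d r mu" using psimu unfolding Fr_int_def by auto
    from Fr_rep[OF mu r0 this erange psieq]
    have eext: "(\<forall>l\<in>L. pair I d mu (w l) > 0 \<longrightarrow> e l = - r) \<and> (\<forall>l\<in>L. pair I d mu (w l) < 0 \<longrightarrow> e l = 0)" .
    have geq: "cocha_geq I E s t d lam mu"
      unfolding cocha_geq_def
    proof (intro ballI impI)
      fix l assume l: "l \<in> L" and pm: "pair I d mu (w l) > 0"
      then have el: "e l = - r" using eext by blast
      show "pair I d lam (w l) > 0"
      proof (rule ccontr)
        assume npos: "\<not> pair I d lam (w l) > 0"
        have lS: "l \<notin> S" using el eS rhalf by force
        have lSr: "l \<notin> Sr" using npos Srpos by blast
        have cl: "c l = - r" using el eO lS lSr by simp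
        have pl0: "pair I d lam (w l) = 0"
        proof (rule ccontr)
          assume "pair I d lam (w l) \<noteq> 0"
          then have "pair I d lam (w l) < 0" using npos by simp
          then have "c l = 0" using cext l by blast
          then show False using cl rhalf by simp
        qed
        define K :: int where "K = 1 + \<lceil>\<Sum>l\<in>L. \<bar>pair I d mu (w l)\<bar>\<rceil>"
        define nu where "nu = (\<lambda>k. K * lam k + mu k)"
        have Kbig: "real_of_int K \<ge> 1 + \<bar>pair I d mu (w l')\<bar>" if "l' \<in> L" for l'
        proof -
          have "\<bar>pair I d mu (w l')\<bar> \<le> (\<Sum>l\<in>L. \<bar>pair I d mu (w l)\<bar>)"
            by (rule member_le_sum) (use that finL in auto)
          also have "\<dots> \<le> real_of_int \<lceil>\<Sum>l\<in>L. \<bar>pair I d mu (w l)\<bar>\<rceil>" by linarith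
          finally show ?thesis unfolding K_def by simp
        qed
        have pnu: "pair I d nu (w l') = real_of_int K * pair I d lam (w l') + pair I d mu (w l')" for l'
          unfolding nu_def pair_comb ..
        have sgn1: "pair I d nu (w l') > 0" if l'L: "l' \<in> L" and "pair I d lam (w l') > 0" for l'
        proof -
          obtain z where z: "pair I d lam (w l') = real_of_int z" using pair_wt_int[OF l'L] by blast
          then have "pair I d lam (w l') \<ge> 1" using that(2) by simp
          moreover have "real_of_int K \<ge> 0" using Kbig[OF that(1)] by simp
          ultimately have "real_of_int K * pair I d lam (w l') \<ge> real_of_int K"
            using mult_left_mono by fastforce
          then show ?thesis unfolding pnu using Kbig[OF that(1)] by linarith
        qed
        have sgn2: "pair I d nu (w l') < 0" if l'L: "l' \<in> L" and "pair I d lam (w l') < 0" for l'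
        proof -
          obtain z where z: "pair I d lam (w l') = real_of_int z" using pair_wt_int[OF l'L] by blast
          then have "pair I d lam (w l') \<le> -1" using that(2) by simp
          moreover have "real_of_int K \<ge> 0" using Kbig[OF that(1)] by simp
          ultimately have "real_of_int K * pair I d lam (w l') \<le> - real_of_int K"
            using mult_left_mono[of "pair I d lam (w l')" "-1" "real_of_int K"] by simp
          then show ?thesis unfolding pnu using Kbig[OF that(1)] by linarith
        qed
        have nuSG: "cochar_SG I d nu"
        proof -
          have "(\<Sum>k\<in>X. nu k) = K * (\<Sum>k\<in>X. lam k) + (\<Sum>k\<in>X. mu k)"
            unfolding nu_def by (simp add: sum.distrib sum_distrib_left)
          then show ?thesis using lam mu unfolding cochar_SG_def nu_def by auto
        qed
        have nugt: "cocha_gt I E s t d nu lam"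
          unfolding cocha_gt_def cocha_geq_def
        proof
          show "\<forall>l\<in>L. 0 < pair I d lam (w l) \<longrightarrow> 0 < pair I d nu (w l)" using sgn1 by blast
          have "pair I d nu (w l) > 0" using pnu pl0 pm by simp
          then show "\<not> (\<forall>la\<in>L. 0 < pair I d nu (w la) \<longrightarrow> 0 < pair I d lam (w la))" using l pl0 by force
        qed
        have cnu: "(\<forall>l\<in>L. pair I d nu (w l) > 0 \<longrightarrow> c l = - r) \<and> (\<forall>l\<in>L. pair I d nu (w l) < 0 \<longrightarrow> c l = 0)"
        proof (intro conjI ballI impI)
          fix l' assume l': "l' \<in> L" and pn: "pair I d nu (w l') > 0"
          consider "pair I d lam (w l') > 0" | "pair I d lam (w l') < 0" | "pair I d lam (w l') = 0" by linarith
          then show "c l' = - r"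
          proof cases
            case 1 then show ?thesis using cext l' by blast
          next
            case 2 then show ?thesis using sgn2[OF l'] pn by simp
          next
            case 3
            then have "pair I d mu (w l') > 0" using pn pnu by simp
            then have "e l' = - r" using eext l' by blast
            moreover have "l' \<notin> S" "l' \<notin> Sr" using 3 Sneg Srpos by force+
            ultimately show ?thesis using eO by simp
          qed
        next
          fix l' assume l': "l' \<in> L" and pn: "pair I d nu (w l') < 0"
          consider "pair I d lam (w l') > 0" | "pair I d lam (w l') < 0" | "pair I d lam (w l') = 0" by linarith
          then show "c l' = 0"
          proof cases
            case 1 then show ?thesis using sgn1[OF l'] pn by simp
          next
            case 2 then show ?thesis using cext l' by blast
          next
            case 3
            then have "pair I d mu (w l') < 0" using pn pnu by simp
            then have "e l' = 0" using eext l' by blast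
            moreover have "l' \<notin> S" "l' \<notin> Sr" using 3 Sneg Srpos by force+
            ultimately show ?thesis using eO by simp
          qed
        qed
        have "chi \<in> Fr I E s t d r nu" using rep_Fr[OF nuSG r0 c chieq cnu] .
        then show False using chiF nuSG nugt unfolding Fr_int_def by blast
      qed
    qed
    have ngeq: "\<not> cocha_geq I E s t d mu lam"
    proof
      assume g: "cocha_geq I E s t d mu lam"
      obtain l0 where l0: "l0 \<in> S" using Sne by blast
      have "rv l0 \<in> Sr" "rv l0 \<in> L" using l0 SrL unfolding Sr_def by auto
      then have "pair I d mu (w (rv l0)) > 0" using g Srpos unfolding cocha_geq_def by blast
      then have "e (rv l0) = - r" using eext \<open>rv l0 \<in> L\<close> by blast
      then show False using eSr \<open>rv l0 \<in> Sr\<close> by simp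
    qed
    show ?thesis unfolding cocha_gt_def using geq ngeq by blast
  qed
  have part3: "rp_less (r_inv I E s t d psi, p_inv I E s t d psi) (r, p_inv I E s t d chi)"
  proof -
    have rc: "0 \<le> r_inv I E s t d psi \<and> (\<forall>x. 0 \<le> x \<and> psi \<in> rW I E s t d x \<longrightarrow> r_inv I E s t d psi \<le> x)"
      using rinv_char[OF Xne psiW r0] by blast
    then have rle: "r_inv I E s t d psi \<le> r" using psiW r0 by blast
    show ?thesis
    proof (cases "r_inv I E s t d psi < r")
      case True then show ?thesis unfolding rp_less_def by simp
    next
      case False
      then have req: "r_inv I E s t d psi = r" using rle by simp
      have ppsi: "p_inv I E s t d psi = (LEAST n. \<exists>c cc. (\<forall>l\<in>L. - r \<le> c l \<and> c l \<le> 0) \<and>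
          psi = (\<lambda>k. (\<Sum>l\<in>L. c l * w l k) + cc * tau I d k) \<and> card {l\<in>L. c l = - r} = n)"
        unfolding p_inv_def Let_def req ..
      have "p_inv I E s t d psi \<le> card {l\<in>L. e l = - r}"
        unfolding ppsi by (rule Least_le) (use erange psieq in blast)
      moreover have "{l\<in>L. e l = - r} = {l\<in>L. c l = - r} - Sr"
      proof -
        have "l \<in> L \<Longrightarrow> (e l = - r) \<longleftrightarrow> (c l = - r \<and> l \<notin> Sr)" for l
          using eS eSr eO cS rhalf by (cases "l \<in> S"; cases "l \<in> Sr") auto
        then show ?thesis by auto
      qed
      moreover have "card ({l\<in>L. c l = - r} - Sr) < card {l\<in>L. c l = - r}"
      proof (rule psubset_card_mono)
        show "finite {l\<in>L. c l = - r}" using finL by simp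
        have "Sr \<subseteq> {l\<in>L. c l = - r}" "Sr \<noteq> {}" using SrL cSr Sne unfolding Sr_def by auto
        then show "{l\<in>L. c l = - r} - Sr \<subset> {l\<in>L. c l = - r}" by blast
      qed
      ultimately show ?thesis unfolding rp_less_def using req cnt by simp
    qed
  qed
  show ?thesis unfolding Let_def psi_def[symmetric] using psiW part2 part3 by blast
qed

end

theorem proposition3p6:
  fixes I :: "'v set" and E :: "'e set" and s t :: "'e \<Rightarrow> 'v" and d :: "'v \<Rightarrow> nat"
    and chi :: "'v \<times> nat \<Rightarrow> real" and lam :: "'v \<times> nat \<Rightarrow> int"
    and S :: "('e \<times> nat \<times> nat) set" and r :: real
  assumes "symmetric_quiver I E s t"
    and "Qd_connected I E s t d"
    and "\<not> Qd_trivial I E s t d"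
    and "dominant_weight I d chi"
    and "r = r_inv I E s t d chi"
    and "r > 1/2"
    and "cochar_SG I d lam" and "antidominant I d lam"
    and "chi \<in> Fr_int I E s t d r lam"
    and "S \<subseteq> labels E s t d" and "S \<noteq> {}"
    and "\<forall>l\<in>S. pair I d lam (wt s t l) < 0"
  shows "(let sigma = (\<lambda>k. \<Sum>l\<in>S. wt s t l k); psi = (\<lambda>k. chi k - sigma k) in
           psi \<in> rW I E s t d r \<and>
           (\<forall>mu. cochar_SG I d mu \<and> psi \<in> Fr_int I E s t d r mu \<longrightarrow> cocha_gt I E s t d lam mu) \<and>
           rp_less (r_inv I E s t d psi, p_inv I E s t d psi) (r, p_inv I E s t d chi))"
proof -
  interpret SQ I E s t d by (rule SQ.intro) (rule assms(1))
  show ?thesis by (rule main) (use assms in auto)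
qed

end
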